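(* Let $\mathcal{N}=\{1,\dots,N\}$, $G$ a positive integer, $D>0$, and for each $n\in\mathcal{N}$ let $\rho_n>0$, $E_n>0$, $C_n\in\mathbb{R}$, $p\in\mathbb{R}$. Consider the game in which each client $n$ chooses $x_n\in[0,D]$ to minimize $F_n(\boldsymbol{x})=\rho_n\left(\frac{1}{\sqrt{G\sum_{n'\in\mathcal{N}}x_{n'}}}+\frac{1}{G}\right)+E_nx_n+C_n+p$. If $\frac{\rho_1}{E_1}<\frac{\rho_2}{E_2}<\cdots<\frac{\rho_N}{E_N}$, then this game has a unique Nash equilibrium.
   Context: The cost $F_n$ is $+\infty$ when $\sum_{n'}x_{n'}=0$. A Nash equilibrium is a profile $\boldsymbol{x}^*\in[0,D]^N$ such that for every $n$, $F_n(x_n^*,\boldsymbol{x}^*_{-n})\le F_n(x_n,\boldsymbol{x}^*_{-n})$ for all $x_n\in[0,D]$. *)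

theory Defs
  imports "HOL-Analysis.Analysis" "HOL-Library.FuncSet"
begin

text \<open>Players are indexed by 0,...,N-1. A strategy profile is an extensional function
  on the player set with values in [0,D].\<close>

definition cost :: "nat \<Rightarrow> real \<Rightarrow> (nat \<Rightarrow> real) \<Rightarrow> (nat \<Rightarrow> real) \<Rightarrow> (nat \<Rightarrow> real)
    \<Rightarrow> real \<Rightarrow> (nat \<Rightarrow> real) \<Rightarrow> nat \<Rightarrow> ereal" where
  "cost N G \<rho> E C p x n =
     (if (\<Sum>m<N. x m) = 0 then \<infinity>
      else ereal (\<rho> n * (1 / sqrt (G * (\<Sum>m<N. x m)) + 1 / G) + E n * x n + C n + p))"

definition nash_eq :: "nat \<Rightarrow> real \<Rightarrow> real \<Rightarrow> (nat \<Rightarrow> real) \<Rightarrow> (nat \<Rightarrow> real) \<Rightarrow> (nat \<Rightarrow> real)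
    \<Rightarrow> real \<Rightarrow> (nat \<Rightarrow> real) \<Rightarrow> bool" where
  "nash_eq N G D \<rho> E C p x \<longleftrightarrow>
     x \<in> {..<N} \<rightarrow>\<^sub>E {0..D} \<and>
     (\<forall>n<N. \<forall>y\<in>{0..D}. cost N G \<rho> E C p x n \<le> cost N G \<rho> E C p (x(n := y)) n)"

end

theory Submission
  imports Defs
begin


lemma key_id:
  fixes g \<rho> E \<tau> a b :: real
  assumes "g>0" "E>0" "a>0" "b>0" "\<rho> = 2*E*\<tau>^3 * sqrt g"
  shows "\<rho>*(1/(sqrt g*b)) - \<rho>*(1/(sqrt g*a)) + E*(b^2-a^2) = E*((b-a)*((b+a)*(a*b)-2*\<tau>^3))/(a*b)"
  using assms by (simp add: field_simps power2_eq_square power3_eq_cube)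

lemma sum_upd:
  fixes x :: "nat \<Rightarrow> real"
  assumes "n < N"
  shows "(\<Sum>m<N. (x(n:=y)) m) = (\<Sum>m<N. x m) - x n + y"
proof -
  have "(\<Sum>m<N. (x(n:=y)) m) = (x(n:=y)) n + (\<Sum>m\<in>{..<N}-{n}. (x(n:=y)) m)"
    using assms by (subst sum.remove[of _ n]) auto
  also have "(\<Sum>m\<in>{..<N}-{n}. (x(n:=y)) m) = (\<Sum>m\<in>{..<N}-{n}. x m)"
    by (rule sum.cong) auto
  also have "(\<Sum>m<N. x m) = x n + (\<Sum>m\<in>{..<N}-{n}. x m)"
    using assms by (subst sum.remove[of _ n]) auto
  ultimately show ?thesis by simp
qed

lemma cost_diff:
  fixes g D :: real and \<rho> E C :: "nat \<Rightarrow> real" and x :: "nat \<Rightarrow> real"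
  assumes g: "g > 0" and E: "E n > 0" and \<rho>: "\<rho> n = 2*E n*t^3 * sqrt g" and n: "n < N"
    and S: "(\<Sum>m<N. x m) > 0" and S': "(\<Sum>m<N. x m) - x n + y > 0"
  defines "a \<equiv> sqrt (\<Sum>m<N. x m)" and "b \<equiv> sqrt ((\<Sum>m<N. x m) - x n + y)"
  shows "cost N g \<rho> E C p x n = ereal (\<rho> n*(1/sqrt(g*(\<Sum>m<N. x m))+1/g) + E n*x n + C n + p)"
    and "cost N g \<rho> E C p (x(n:=y)) n = ereal (\<rho> n*(1/sqrt(g*(\<Sum>m<N. x m)) + 1/g) + E n*x n + C n + p
          + E n*((b-a)*((b+a)*(a*b)-2*t^3))/(a*b))"
proof -
  show "cost N g \<rho> E C p x n = ereal (\<rho> n*(1/sqrt(g*(\<Sum>m<N. x m))+1/g) + E n*x n + C n + p)"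
    using S by (simp add: cost_def)
  have a: "a > 0" "a^2 = (\<Sum>m<N. x m)" using S by (auto simp: a_def)
  have b: "b > 0" "b^2 = (\<Sum>m<N. x m) - x n + y" using S' by (auto simp: b_def)
  have sa: "sqrt(g*(\<Sum>m<N. x m)) = sqrt g * a" by (simp add: a_def real_sqrt_mult)
  have sb: "sqrt(g*((\<Sum>m<N. x m) - x n + y)) = sqrt g * b" by (simp add: b_def real_sqrt_mult)
  have k: "\<rho> n*(1/(sqrt g*b)) - \<rho> n*(1/(sqrt g*a)) + E n*(b^2-a^2) = E n*((b-a)*((b+a)*(a*b)-2*t^3))/(a*b)"
    by (rule key_id[OF g E a(1) b(1) \<rho>])
  have "y = x n + (b^2 - a^2)" using a b by simp
  then show "cost N g \<rho> E C p (x(n:=y)) n = ereal (\<rho> n*(1/sqrt(g*(\<Sum>m<N. x m)) + 1/g) + E n*x n + C n + p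
          + E n*((b-a)*((b+a)*(a*b)-2*t^3))/(a*b))"
  proof -
    have su: "(\<Sum>m<N. (x(n:=y)) m) = (\<Sum>m<N. x m) - x n + y" by (rule sum_upd[OF n])
    have "cost N g \<rho> E C p (x(n:=y)) n = ereal (\<rho> n*(1/sqrt(g*((\<Sum>m<N. x m) - x n + y)) + 1/g) + E n*y + C n + p)"
      unfolding cost_def su using S' by simp
    also have "\<rho> n*(1/sqrt(g*((\<Sum>m<N. x m) - x n + y)) + 1/g) + E n*y + C n + p
       = \<rho> n*(1/sqrt(g*(\<Sum>m<N. x m)) + 1/g) + E n*x n + C n + p
          + (\<rho> n*(1/(sqrt g*b)) - \<rho> n*(1/(sqrt g*a)) + E n*(b^2-a^2))"
      unfolding sb sa using arg_cong[OF \<open>y = x n + (b^2 - a^2)\<close>, of "\<lambda>z. E n * z"] by (simp add: algebra_simps)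
    finally show ?thesis unfolding k .
  qed
qed

lemma sign_aux1:
  fixes a b t :: real
  assumes "a>0" "b>0" "t>0" "(a \<le> t \<and> b \<le> a) \<or> (t \<le> a \<and> a \<le> b) \<or> a = t"
  shows "0 \<le> (b-a)*((b+a)*(a*b)-2*t^3)"
proof -
  consider "a \<le> t \<and> b \<le> a" | "t \<le> a \<and> a \<le> b" | "a = t" using assms(4) by blast
  then show ?thesis
  proof cases
    case 1
    have "(b+a)*(a*b) \<le> (2*t)*(t*t)"
      apply (rule mult_mono) using 1 assms by (auto intro: mult_mono)
    then show ?thesis using 1 by (auto simp: power3_eq_cube intro!: mult_nonpos_nonpos)
  next
    case 2
    have "(2*t)*(t*t) \<le> (b+a)*(a*b)"
      apply (rule mult_mono) using 2 assms by (auto intro: mult_mono)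
    then show ?thesis using 2 by (auto simp: power3_eq_cube)
  next
    case 3
    have "(b-a)*((b+a)*(a*b)-2*t^3) = a*(b-a)^2*(b+2*a)" using 3 by (simp add: algebra_simps power2_eq_square power3_eq_cube)
    then show ?thesis using assms by simp
  qed
qed

lemma sign_aux2:
  fixes a b t :: real
  assumes "a>0" "b>0" "t>0" "(t \<le> b \<and> b < a) \<or> (a < b \<and> b \<le> t)"
  shows "(b-a)*((b+a)*(a*b)-2*t^3) < 0"
proof -
  consider "t \<le> b \<and> b < a" | "a < b \<and> b \<le> t" using assms(4) by blast
  then show ?thesis
  proof cases
    case 1
    have "t*t \<le> a*b" using 1 assms by (intro mult_mono) auto
    then have "(2*t)*(t*t) < (b+a)*(a*b)"
      using 1 assms by (intro mult_less_le_imp_less) auto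
    then show ?thesis using 1 by (auto simp: power3_eq_cube intro!: mult_neg_pos)
  next
    case 2
    have "a*b \<le> t*t" using 2 assms by (intro mult_mono) auto
    then have "(b+a)*(a*b) < (2*t)*(t*t)"
      using 2 assms by (intro mult_less_le_imp_less) auto
    then show ?thesis using 2 by (auto simp: power3_eq_cube intro!: mult_pos_neg)
  qed
qed

lemma sqrt_le_sq: "0 \<le> (S::real) \<Longrightarrow> 0 < t \<Longrightarrow> (S \<le> t^2 \<longleftrightarrow> sqrt S \<le> t)"
  by (metis abs_of_pos less_eq_real_def real_sqrt_abs real_sqrt_le_iff real_sqrt_le_mono real_sqrt_pow2 power2_eq_square)

lemma sqrt_ge_sq: "0 \<le> (S::real) \<Longrightarrow> 0 < t \<Longrightarrow> (t^2 \<le> S \<longleftrightarrow> t \<le> sqrt S)"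
  by (metis abs_of_pos real_sqrt_abs real_sqrt_le_iff)

lemma others_nonneg:
  fixes x :: "nat \<Rightarrow> real"
  assumes "n < N" "\<And>m. m < N \<Longrightarrow> 0 \<le> x m"
  shows "0 \<le> (\<Sum>m<N. x m) - x n"
proof -
  have "(\<Sum>m<N. x m) = x n + (\<Sum>m\<in>{..<N}-{n}. x m)"
    using assms by (subst sum.remove[of _ n]) auto
  moreover have "0 \<le> (\<Sum>m\<in>{..<N}-{n}. x m)" using assms by (intro sum_nonneg) auto
  ultimately show ?thesis by simp
qed

lemma char:
  fixes g D :: real and \<rho> E C \<tau> :: "nat \<Rightarrow> real" and x :: "nat \<Rightarrow> real"
  assumes g: "g > 0" and D: "D > 0" and N: "N \<ge> 1"
    and E: "\<And>n. n < N \<Longrightarrow> E n > 0" and tau: "\<And>n. n < N \<Longrightarrow> \<tau> n > 0"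
    and rho: "\<And>n. n < N \<Longrightarrow> \<rho> n = 2*E n*\<tau> n^3 * sqrt g"
    and x: "x \<in> {..<N} \<rightarrow>\<^sub>E {0..D}"
  shows "nash_eq N g D \<rho> E C p x \<longleftrightarrow> (\<Sum>m<N. x m) > 0 \<and>
     (\<forall>n<N. (0 < x n \<longrightarrow> (\<Sum>m<N. x m) \<le> \<tau> n^2) \<and> (x n < D \<longrightarrow> \<tau> n^2 \<le> (\<Sum>m<N. x m)))"
proof -
  define S where "S = (\<Sum>m<N. x m)"
  have xr: "\<And>m. m < N \<Longrightarrow> 0 \<le> x m \<and> x m \<le> D" using x by (simp add: PiE_iff)
  have S0: "S \<ge> 0" unfolding S_def using xr by (intro sum_nonneg) auto
  have s0: "\<And>n. n < N \<Longrightarrow> 0 \<le> S - x n" unfolding S_def by (rule others_nonneg) (use xr in auto)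
  show ?thesis unfolding S_def[symmetric]
  proof
    assume nash: "nash_eq N g D \<rho> E C p x"
    then have nash': "\<And>n y. n < N \<Longrightarrow> y \<in> {0..D} \<Longrightarrow> cost N g \<rho> E C p x n \<le> cost N g \<rho> E C p (x(n := y)) n"
      unfolding nash_eq_def by blast
    have Spos: "S > 0"
    proof (rule ccontr)
      assume "\<not> S > 0"
      then have "S = 0" using S0 by simp
      then have "x 0 = 0" unfolding S_def using xr N
        by (subst (asm) sum_nonneg_eq_0_iff) auto
      have "(\<Sum>m<N. (x(0:=D)) m) = D" using sum_upd[of 0 N x D] N \<open>x 0 = 0\<close> \<open>S = 0\<close>
        unfolding S_def by simp
      then have "cost N g \<rho> E C p (x(0 := D)) 0 \<noteq> \<infinity>" using D by (simp add: cost_def)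
      moreover have "cost N g \<rho> E C p x 0 = \<infinity>" using \<open>S = 0\<close> unfolding S_def cost_def by simp
      moreover have "cost N g \<rho> E C p x 0 \<le> cost N g \<rho> E C p (x(0 := D)) 0"
        using nash'[of 0 D] N D by auto
      ultimately show False by simp
    qed
    moreover have "0 < x n \<longrightarrow> S \<le> \<tau> n^2" if n: "n < N" for n
    proof
      assume xn: "0 < x n"
      show "S \<le> \<tau> n^2"
      proof (rule ccontr)
        assume "\<not> S \<le> \<tau> n^2"
        then have lt: "\<tau> n^2 < S" by simp
        define w where "w = max (S - x n) (\<tau> n^2)"
        define y where "y = w - (S - x n)"
        have y: "y \<in> {0..D}" "y < x n" using xr[OF n] xn lt unfolding y_def w_def by auto
        have Sy: "S - x n + y = w" unfolding y_def by simp
        have "\<tau> n^2 > 0" using tau[OF n] by simp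
        then have wpos: "w > 0" unfolding w_def by linarith
        define a where "a = sqrt S"
        define b where "b = sqrt w"
        have ab: "a > 0" "b > 0" using Spos wpos by (auto simp: a_def b_def)
        have "\<tau> n \<le> b" unfolding b_def using tau[OF n] wpos
          by (subst sqrt_ge_sq[symmetric]) (auto simp: w_def)
        moreover have "b < a" unfolding a_def b_def using y Sy by simp
        ultimately have neg: "(b-a)*((b+a)*(a*b)-2*\<tau> n^3) < 0"
          using sign_aux2[OF ab tau[OF n]] by blast
        have "E n*((b-a)*((b+a)*(a*b)-2*\<tau> n^3))/(a*b) < 0"
          using neg ab E[OF n] by (simp add: divide_neg_pos mult_pos_neg)
        then have "cost N g \<rho> E C p (x(n:=y)) n < cost N g \<rho> E C p x n"
          using cost_diff[where g=g and E=E and n=n and \<rho>=\<rho> and t="\<tau> n" and N=N and x=x and y=y and C=C and p=p, OF g E[OF n] rho[OF n] n] Spos wpos Sy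
          unfolding S_def a_def b_def by simp
        then show False using nash'[OF n y(1)] by simp
      qed
    qed
    moreover have "x n < D \<longrightarrow> \<tau> n^2 \<le> S" if n: "n < N" for n
    proof
      assume xn: "x n < D"
      show "\<tau> n^2 \<le> S"
      proof (rule ccontr)
        assume "\<not> \<tau> n^2 \<le> S"
        then have lt: "S < \<tau> n^2" by simp
        define w where "w = min (S - x n + D) (\<tau> n^2)"
        define y where "y = w - (S - x n)"
        have y: "y \<in> {0..D}" "x n < y" using xr[OF n] xn lt s0[OF n] unfolding y_def w_def by auto
        have Sy: "S - x n + y = w" unfolding y_def by simp
        have wpos: "w > 0" using Spos y Sy by simp
        define a where "a = sqrt S"
        define b where "b = sqrt w"
        have ab: "a > 0" "b > 0" using Spos wpos by (auto simp: a_def b_def)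
        have "b \<le> \<tau> n" unfolding b_def using tau[OF n] wpos
          by (subst sqrt_le_sq[symmetric]) (auto simp: w_def)
        moreover have "a < b" unfolding a_def b_def using y Sy by simp
        ultimately have neg: "(b-a)*((b+a)*(a*b)-2*\<tau> n^3) < 0"
          using sign_aux2[OF ab tau[OF n]] by blast
        have "E n*((b-a)*((b+a)*(a*b)-2*\<tau> n^3))/(a*b) < 0"
          using neg ab E[OF n] by (simp add: divide_neg_pos mult_pos_neg)
        then have "cost N g \<rho> E C p (x(n:=y)) n < cost N g \<rho> E C p x n"
          using cost_diff[where g=g and E=E and n=n and \<rho>=\<rho> and t="\<tau> n" and N=N and x=x and y=y and C=C and p=p, OF g E[OF n] rho[OF n] n] Spos wpos Sy
          unfolding S_def a_def b_def by simp
        then show False using nash'[OF n y(1)] by simp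
      qed
    qed
    ultimately show "S > 0 \<and> (\<forall>n<N. (0 < x n \<longrightarrow> S \<le> \<tau> n^2) \<and> (x n < D \<longrightarrow> \<tau> n^2 \<le> S))"
      by blast
  next
    assume H: "S > 0 \<and> (\<forall>n<N. (0 < x n \<longrightarrow> S \<le> \<tau> n^2) \<and> (x n < D \<longrightarrow> \<tau> n^2 \<le> S))"
    then have Spos: "S > 0" by blast
    have "cost N g \<rho> E C p x n \<le> cost N g \<rho> E C p (x(n := y)) n"
      if n: "n < N" and y: "y \<in> {0..D}" for n y
    proof (cases "S - x n + y = 0")
      case True
      then show ?thesis using sum_upd[OF n, of x y] unfolding S_def by (simp add: cost_def)
    next
      case False
      then have Sy: "S - x n + y > 0" using s0[OF n] y by simp
      define a where "a = sqrt S"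
      define b where "b = sqrt (S - x n + y)"
      have ab: "a > 0" "b > 0" using Spos Sy by (auto simp: a_def b_def)
      have "(a \<le> \<tau> n \<and> b \<le> a) \<or> (\<tau> n \<le> a \<and> a \<le> b) \<or> a = \<tau> n"
      proof -
        consider "x n = 0" | "x n = D" | "0 < x n \<and> x n < D" using xr[OF n] by fastforce
        then show ?thesis
        proof cases
          case 1
          then have "\<tau> n \<le> a" using H n D tau[OF n] S0 unfolding a_def
            by (subst sqrt_ge_sq[symmetric]) auto
          moreover have "a \<le> b" unfolding a_def b_def using 1 y by simp
          ultimately show ?thesis by blast
        next
          case 2
          then have "a \<le> \<tau> n" using H n D tau[OF n] S0 unfolding a_def
            by (subst sqrt_le_sq[symmetric]) auto
          moreover have "b \<le> a" unfolding a_def b_def using 2 y by simp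
          ultimately show ?thesis by blast
        next
          case 3
          then have "S = \<tau> n^2" using H n by force
          then have "a = \<tau> n" unfolding a_def using tau[OF n] by simp
          then show ?thesis by blast
        qed
      qed
      then have "0 \<le> (b-a)*((b+a)*(a*b)-2*\<tau> n^3)" using sign_aux1[OF ab tau[OF n]] by blast
      then have "0 \<le> E n*((b-a)*((b+a)*(a*b)-2*\<tau> n^3))/(a*b)"
        using ab E[OF n] by simp
      then show ?thesis
        using cost_diff[where g=g and E=E and n=n and \<rho>=\<rho> and t="\<tau> n" and N=N and x=x and y=y and C=C and p=p, OF g E[OF n] rho[OF n] n] Spos Sy
        unfolding S_def a_def b_def by simp
    qed
    then show "nash_eq N g D \<rho> E C p x" unfolding nash_eq_def using x by blast
  qed
qed



definition eqc :: "nat \<Rightarrow> real \<Rightarrow> (nat \<Rightarrow> real) \<Rightarrow> (nat \<Rightarrow> real) \<Rightarrow> bool" where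
  "eqc N D T x \<longleftrightarrow> (\<Sum>m<N. x m) > 0 \<and>
     (\<forall>n<N. (0 < x n \<longrightarrow> (\<Sum>m<N. x m) \<le> T n) \<and> (x n < D \<longrightarrow> T n \<le> (\<Sum>m<N. x m)))"

lemma eqc_unique:
  fixes T :: "nat \<Rightarrow> real" and D :: real
  assumes Tm: "\<And>n m. n < m \<Longrightarrow> m < N \<Longrightarrow> T n < T m"
    and x: "x \<in> {..<N} \<rightarrow>\<^sub>E {0..D}" and z: "z \<in> {..<N} \<rightarrow>\<^sub>E {0..D}"
    and ex: "eqc N D T x" and ez: "eqc N D T z"
  shows "x = z"
proof -
  have xr: "\<And>m. m < N \<Longrightarrow> 0 \<le> x m \<and> x m \<le> D" using x by (simp add: PiE_iff)
  have zr: "\<And>m. m < N \<Longrightarrow> 0 \<le> z m \<and> z m \<le> D" using z by (simp add: PiE_iff)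
  have noless: False if e1: "eqc N D T u" and e2: "eqc N D T v"
      and ur: "\<And>m. m < N \<Longrightarrow> 0 \<le> u m \<and> u m \<le> D"
      and vr: "\<And>m. m < N \<Longrightarrow> 0 \<le> v m \<and> v m \<le> D"
      and lt: "(\<Sum>m<N. u m) < (\<Sum>m<N. v m)" for u v
  proof -
    have "v m \<le> u m" if m: "m < N" for m
    proof (cases "u m < D")
      case True
      then have "T m \<le> (\<Sum>m<N. u m)" using e1 m unfolding eqc_def by blast
      then have "\<not> (0 < v m)" using e2 m lt unfolding eqc_def by force
      then show ?thesis using ur[OF m] by simp
    next
      case False
      then show ?thesis using vr[OF m] by simp
    qed
    then have "(\<Sum>m<N. v m) \<le> (\<Sum>m<N. u m)" by (intro sum_mono) auto
    then show False using lt by simp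
  qed
  define S where "S = (\<Sum>m<N. x m)"
  have Seq: "(\<Sum>m<N. z m) = S"
    using noless[OF ex ez xr zr] noless[OF ez ex zr xr] unfolding S_def by fastforce
  have same: "x n = z n" if n: "n < N" and Tn: "T n \<noteq> S" for n
  proof (cases "T n < S")
    case True
    then have "\<not> 0 < x n" "\<not> 0 < z n" using ex ez n Seq unfolding eqc_def S_def by force+
    then show ?thesis using xr[OF n] zr[OF n] by simp
  next
    case False
    then have "S < T n" using Tn by simp
    then have "\<not> x n < D" "\<not> z n < D" using ex ez n Seq unfolding eqc_def S_def by force+
    then show ?thesis using xr[OF n] zr[OF n] by simp
  qed
  show ?thesis
  proof (cases "\<exists>j<N. T j = S")
    case False
    then show ?thesis using same by (intro PiE_ext[OF x z]) auto
  next
    case True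
    then obtain j where j: "j < N" "T j = S" by blast
    have oth: "x n = z n" if "n \<in> {..<N} - {j}" for n
    proof -
      have "T n \<noteq> T j" using that Tm[of n j] Tm[of j n] j by (cases "n < j") auto
      then show ?thesis using same that j by auto
    qed
    have rest: "(\<Sum>m\<in>{..<N}-{j}. x m) = (\<Sum>m\<in>{..<N}-{j}. z m)" using oth by (rule sum.cong[OF refl])
    have "S = x j + (\<Sum>m\<in>{..<N}-{j}. x m)" unfolding S_def using j by (subst sum.remove[of _ j]) auto
    moreover have "S = z j + (\<Sum>m\<in>{..<N}-{j}. z m)" unfolding Seq[symmetric] using j by (subst sum.remove[of _ j]) auto
    ultimately have "x j = z j" using rest by simp
    then show ?thesis using oth by (intro PiE_ext[OF x z]) (metis Diff_iff singletonD)
  qed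
qed

lemma cnt_sum:
  fixes D :: real
  shows "j < N \<Longrightarrow> (\<Sum>m<N. if j < m then D else 0) = (real N - real j - 1) * D"
proof (induction N)
  case 0
  then show ?case by simp
next
  case (Suc N)
  show ?case
  proof (cases "j < N")
    case True
    then show ?thesis using Suc by (simp add: algebra_simps)
  next
    case False
    then have "j = N" using Suc by simp
    then show ?thesis by simp
  qed
qed

lemma eqc_exists:
  fixes T :: "nat \<Rightarrow> real" and D :: real
  assumes Tm: "\<And>n m. n < m \<Longrightarrow> m < N \<Longrightarrow> T n < T m"
    and Tpos: "\<And>n. n < N \<Longrightarrow> T n > 0" and D: "D > 0" and N: "N \<ge> 1"
  shows "\<exists>x. x \<in> {..<N} \<rightarrow>\<^sub>E {0..D} \<and> eqc N D T x"
proof -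
  have Tle: "T n \<le> T m" if "n \<le> m" "m < N" for n m
    using Tm[of n m] that by (cases "n = m") auto
  show ?thesis
  proof (cases "real N * D \<le> T 0")
    case True
    define x where "x = restrict (\<lambda>_. D) {..<N}"
    have S: "(\<Sum>m<N. x m) = real N * D"
    proof -
      have "(\<Sum>m<N. x m) = (\<Sum>m<N. D)" by (rule sum.cong) (auto simp: x_def)
      then show ?thesis by simp
    qed
    have "x \<in> {..<N} \<rightarrow>\<^sub>E {0..D}" using D by (auto simp: x_def)
    moreover have "eqc N D T x" unfolding eqc_def S
    proof (intro conjI allI impI)
      show "0 < real N * D" using N D by simp
    next
      fix n assume "n < N"
      then show "real N * D \<le> T n" using True Tle[of 0 n] by simp
    next
      fix n assume "n < N" "x n < D"
      then show "T n \<le> real N * D" by (simp add: x_def)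
    qed
    ultimately show ?thesis by blast
  next
    case False
    define J where "J = {j. j < N \<and> T j \<le> (real N - real j) * D}"
    have fin: "finite J" unfolding J_def by simp
    have "0 \<in> J" using False N unfolding J_def by simp
    define j where "j = Max J"
    have jJ: "j \<in> J" unfolding j_def using fin \<open>0 \<in> J\<close> by (intro Max_in) auto
    then have j: "j < N" "T j \<le> (real N - real j) * D" unfolding J_def by auto
    have above: "(real N - real m) * D < T m" if "j < m" "m < N" for m
    proof (rule ccontr)
      assume "\<not> ?thesis"
      then have "m \<in> J" using that unfolding J_def by auto
      then have "m \<le> j" unfolding j_def using fin by (intro Max_ge)
      then show False using that by simp
    qed
    define A where "A = (real N - real j - 1) * D"
    show ?thesis
    proof (cases "A \<le> T j")
      case True
      define x where "x = restrict (\<lambda>m. if m < j then 0 else if m = j then T j - A else D) {..<N}"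
      have S: "(\<Sum>m<N. x m) = T j"
      proof -
        have "(\<Sum>m<N. x m) = (\<Sum>m<N. (if j < m then D else 0) + (if m = j then T j - A else 0))"
          by (rule sum.cong) (auto simp: x_def)
        also have "\<dots> = A + (T j - A)"
          by (simp add: sum.distrib cnt_sum[OF j(1)] A_def j(1))
        finally show ?thesis by simp
      qed
      have "x \<in> {..<N} \<rightarrow>\<^sub>E {0..D}" using D True j
        by (auto simp: x_def A_def algebra_simps)
      moreover have "eqc N D T x" unfolding eqc_def S
      proof (intro conjI allI impI)
        show "0 < T j" using Tpos j by simp
      next
        fix n assume n: "n < N" "0 < x n"
        then have "j \<le> n" by (auto simp: x_def split: if_splits)
        then show "T j \<le> T n" using Tle n by simp
      next
        fix n assume n: "n < N" "x n < D"
        then have "n \<le> j" using D by (auto simp: x_def split: if_splits)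
        then show "T n \<le> T j" using Tle j by simp
      qed
      ultimately show ?thesis by blast
    next
      case False
      define x where "x = restrict (\<lambda>m. if j < m then D else 0) {..<N}"
      have S: "(\<Sum>m<N. x m) = A"
      proof -
        have "(\<Sum>m<N. x m) = (\<Sum>m<N. (if j < m then D else 0))"
          by (rule sum.cong) (auto simp: x_def)
        then show ?thesis by (simp add: cnt_sum[OF j(1)] A_def)
      qed
      have Apos: "A > 0" using False Tpos j by force
      then have j1: "Suc j < N" using D unfolding A_def
        by (smt (verit, ccfv_SIG) of_nat_Suc of_nat_less_iff zero_less_mult_pos2)
      have "A < T (Suc j)" using above[of "Suc j"] j1 unfolding A_def by (simp add: algebra_simps)
      have "x \<in> {..<N} \<rightarrow>\<^sub>E {0..D}" using D by (auto simp: x_def)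
      moreover have "eqc N D T x" unfolding eqc_def S
      proof (intro conjI allI impI)
        show "0 < A" by fact
      next
        fix n assume n: "n < N" "0 < x n"
        then have "Suc j \<le> n" by (auto simp: x_def split: if_splits)
        then show "A \<le> T n" using Tle[of "Suc j" n] n \<open>A < T (Suc j)\<close> by simp
      next
        fix n assume n: "n < N" "x n < D"
        then have "n \<le> j" using D by (auto simp: x_def split: if_splits)
        then show "T n \<le> A" using Tle[of n j] j False by simp
      qed
      ultimately show ?thesis by blast
    qed
  qed
qed


lemma ratio_mono:
  fixes r :: "nat \<Rightarrow> real"
  assumes "\<And>n. Suc n < N \<Longrightarrow> r n < r (Suc n)"
  shows "n < m \<Longrightarrow> m < N \<Longrightarrow> r n < r m"
proof (induction m)
  case 0
  then show ?case by simp
next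
  case (Suc m)
  show ?case
  proof (cases "n = m")
    case True
    then show ?thesis using assms Suc.prems by simp
  next
    case False
    then have "r n < r m" using Suc by simp
    also have "r m < r (Suc m)" using assms Suc.prems by simp
    finally show ?thesis .
  qed
qed

theorem theorem2:
  fixes N G :: nat and D p :: real and \<rho> E C :: "nat \<Rightarrow> real"
  assumes "N \<ge> 1" and "G > 0" and "D > 0"
    and "\<And>n. n < N \<Longrightarrow> \<rho> n > 0"
    and "\<And>n. n < N \<Longrightarrow> E n > 0"
    and "\<And>n. Suc n < N \<Longrightarrow> \<rho> n / E n < \<rho> (Suc n) / E (Suc n)"
  shows "\<exists>!x. nash_eq N (real G) D \<rho> E C p x"
proof -
  define g where "g = real G"
  have g: "g > 0" using assms(2) by (simp add: g_def)
  define \<tau> where "\<tau> n = root 3 (\<rho> n / (2 * E n * sqrt g))" for n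
  have tau: "\<tau> n > 0" if "n < N" for n
    unfolding \<tau>_def using assms(4,5)[OF that] g by (intro real_root_gt_zero) auto
  have rho: "\<rho> n = 2 * E n * \<tau> n ^ 3 * sqrt g" if "n < N" for n
  proof -
    have "\<tau> n ^ 3 = \<rho> n / (2 * E n * sqrt g)"
      unfolding \<tau>_def using assms(4,5)[OF that] g by (intro real_root_pow_pos2) auto
    then show ?thesis using assms(5)[OF that] g by (simp add: field_simps)
  qed
  have rm: "\<rho> n / E n < \<rho> m / E m" if "n < m" "m < N" for n m
    using ratio_mono[of N "\<lambda>n. \<rho> n / E n", OF assms(6)] that by blast
  have Tm: "\<tau> n ^ 2 < \<tau> m ^ 2" if nm: "n < m" "m < N" for n m
  proof -
    have "\<rho> n / (2 * E n * sqrt g) = (\<rho> n / E n) / (2 * sqrt g)"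
      "\<rho> m / (2 * E m * sqrt g) = (\<rho> m / E m) / (2 * sqrt g)" by simp_all
    moreover have "(\<rho> n / E n) / (2 * sqrt g) < (\<rho> m / E m) / (2 * sqrt g)"
      using rm[OF nm] g by (intro divide_strict_right_mono) auto
    ultimately have "\<tau> n < \<tau> m" unfolding \<tau>_def by simp
    then show ?thesis using tau[of n] nm by (intro power_strict_mono) auto
  qed
  have Tpos: "\<tau> n ^ 2 > 0" if "n < N" for n using tau[OF that] by simp
  have ch: "nash_eq N g D \<rho> E C p x \<longleftrightarrow> eqc N D (\<lambda>n. \<tau> n ^ 2) x"
    if x: "x \<in> {..<N} \<rightarrow>\<^sub>E {0..D}" for x
    unfolding eqc_def by (rule char[OF g assms(3,1) assms(5) tau rho x])
  obtain x where x: "x \<in> {..<N} \<rightarrow>\<^sub>E {0..D}" "eqc N D (\<lambda>n. \<tau> n ^ 2) x"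
    using eqc_exists[of N "\<lambda>n. \<tau> n ^ 2" D, OF Tm Tpos assms(3,1)] by blast
  show ?thesis unfolding g_def[symmetric]
  proof (rule ex1I[of _ x])
    show "nash_eq N g D \<rho> E C p x" using ch x by blast
  next
    fix z assume z: "nash_eq N g D \<rho> E C p z"
    then have zP: "z \<in> {..<N} \<rightarrow>\<^sub>E {0..D}" unfolding nash_eq_def by blast
    then have "eqc N D (\<lambda>n. \<tau> n ^ 2) z" using ch z by blast
    then show "z = x" using eqc_unique[OF Tm zP x(1) _ x(2)] by blast
  qed
qed

end
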